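(* Let $1\le r\le s\le t$ and let $u=ABCd$, $v=A'B'C'd'$ be vertices of $E3C(r,s,t)$ with $A\ne A'$, $B\ne B'$, $C\ne C'$ and $d=d'$ (any $d\in\{0,1,2\}$). Then there exist $2r+2$ pairwise internally disjoint $u$–$v$ paths in $E3C(r,s,t)$, each of length at most $r+s+t+4$.
   Context: The exchanged 3-ary $n$-cube $E3C(r,s,t)$ ($r,s,t\ge1$, $n=r+s+t+1$): vertices are strings written $x=ABCd$ with $A\in\{0,1,2\}^r$, $B\in\{0,1,2\}^s$, $C\in\{0,1,2\}^t$, $d\in\{0,1,2\}$. Two distinct vertices $x=ABCd$, $y=A'B'C'd'$ are adjacent iff one of: (E0) $A=A',B=B',C=C'$ and $d\ne d'$; (E1) $d=d'=0$, $A=A'$, $B=B'$ and $C,C'$ differ in exactly one position; (E2) $d=d'=1$, $A=A'$, $C=C'$ and $B,B'$ differ in exactly one position; (E3) $d=d'=2$, $B=B'$, $C=C'$ and $A,A'$ differ in exactly one position. Paths are internally disjoint if they share no vertices other than their endpoints; length = number of edges. *)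

theory Defs
  imports Main
begin

type_synonym e3c_vertex = "nat list \<times> nat list \<times> nat list \<times> nat"

definition tern_str :: "nat \<Rightarrow> nat list \<Rightarrow> bool" where
  "tern_str k X \<longleftrightarrow> length X = k \<and> (\<forall>x\<in>set X. x < 3)"

definition e3c_verts :: "nat \<Rightarrow> nat \<Rightarrow> nat \<Rightarrow> e3c_vertex set" where
  "e3c_verts r s t = {(A,B,C,d). tern_str r A \<and> tern_str s B \<and> tern_str t C \<and> d < 3}"

definition differ_one :: "nat list \<Rightarrow> nat list \<Rightarrow> bool" where
  "differ_one X Y \<longleftrightarrow> length X = length Y \<and> card {i. i < length X \<and> X ! i \<noteq> Y ! i} = 1"

definition e3c_adj :: "nat \<Rightarrow> nat \<Rightarrow> nat \<Rightarrow> e3c_vertex \<Rightarrow> e3c_vertex \<Rightarrow> bool" where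
  "e3c_adj r s t x y \<longleftrightarrow> x \<in> e3c_verts r s t \<and> y \<in> e3c_verts r s t \<and> x \<noteq> y \<and>
     (case x of (A,B,C,d) \<Rightarrow> case y of (A',B',C',d') \<Rightarrow>
        (A = A' \<and> B = B' \<and> C = C' \<and> d \<noteq> d') \<or>
        (d = 0 \<and> d' = 0 \<and> A = A' \<and> B = B' \<and> differ_one C C') \<or>
        (d = 1 \<and> d' = 1 \<and> A = A' \<and> C = C' \<and> differ_one B B') \<or>
        (d = 2 \<and> d' = 2 \<and> B = B' \<and> C = C' \<and> differ_one A A'))"

definition e3c_path :: "nat \<Rightarrow> nat \<Rightarrow> nat \<Rightarrow> e3c_vertex \<Rightarrow> e3c_vertex \<Rightarrow> e3c_vertex list \<Rightarrow> bool" where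
  "e3c_path r s t u v p \<longleftrightarrow> p \<noteq> [] \<and> hd p = u \<and> last p = v \<and> distinct p \<and>
     set p \<subseteq> e3c_verts r s t \<and> (\<forall>i. Suc i < length p \<longrightarrow> e3c_adj r s t (p ! i) (p ! Suc i))"

definition path_len :: "'a list \<Rightarrow> nat" where
  "path_len p = length p - 1"

definition interior :: "'a list \<Rightarrow> 'a set" where
  "interior p = set (butlast (tl p))"

definition internally_disjoint :: "'a list \<Rightarrow> 'a list \<Rightarrow> bool" where
  "internally_disjoint p q \<longleftrightarrow> interior p \<inter> interior q = {}"

end

theory Submission
  imports Defs
begin

lemma successively_nth_iff:
  "successively P xs \<longleftrightarrow> (\<forall>i. Suc i < length xs \<longrightarrow> P (xs!i) (xs!Suc i))"
proof (induction xs rule: induct_list012)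
  case (3 x y xs)
  show ?case
  proof
    assume "successively P (x # y # xs)"
    then show "\<forall>i. Suc i < length (x # y # xs) \<longrightarrow> P ((x # y # xs) ! i) ((x # y # xs) ! Suc i)"
      using 3 by (auto simp: less_Suc_eq_0_disj)
  next
    assume H: "\<forall>i. Suc i < length (x # y # xs) \<longrightarrow> P ((x # y # xs) ! i) ((x # y # xs) ! Suc i)"
    have "P x y" using H[rule_format, of 0] by simp
    moreover have "\<forall>i. Suc i < length (y # xs) \<longrightarrow> P ((y # xs) ! i) ((y # xs) ! Suc i)"
      using H by (metis Suc_less_eq length_Cons nth_Cons_Suc)
    ultimately show "successively P (x # y # xs)" using 3 by simp
  qed
qed auto

lemma successively_map_upt:
  assumes "\<And>k. a \<le> k \<Longrightarrow> Suc k < b \<Longrightarrow> P (f k) (f (Suc k))"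
  shows "successively P (map f [a..<b])"
  unfolding successively_nth_iff using assms by (auto simp: nth_map_upt add.commute)

definition dps :: "nat list \<Rightarrow> nat list \<Rightarrow> nat list" where
  "dps S S' = filter (\<lambda>i. S!i \<noteq> S'!i) [0..<length S]"

definition ovr :: "nat list \<Rightarrow> nat list \<Rightarrow> (nat \<Rightarrow> bool) \<Rightarrow> nat list" where
  "ovr S S' Q = map (\<lambda>i. if (\<exists>j<length (dps S S'). dps S S' ! j = i \<and> Q j) then S'!i else S!i) [0..<length S]"

lemma dps_distinct: "distinct (dps S S')" by (simp add: dps_def)
lemma set_dps: "set (dps S S') = {i. i < length S \<and> S!i \<noteq> S'!i}" by (auto simp: dps_def)

lemma dps_nth: "j < length (dps S S') \<Longrightarrow> dps S S' ! j < length S \<and> S!(dps S S'!j) \<noteq> S'!(dps S S'!j)"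
  using nth_mem set_dps by blast

lemma dps_inj: "j < length (dps S S') \<Longrightarrow> j' < length (dps S S') \<Longrightarrow> dps S S'!j = dps S S'!j' \<Longrightarrow> j = j'"
  using dps_distinct nth_eq_iff_index_eq by blast

lemma dps_len: "length (dps S S') \<le> length S"
  unfolding dps_def using length_filter_le[of _ "[0..<length S]"] by simp

lemma dps_len_less: "i < length S \<Longrightarrow> S!i = S'!i \<Longrightarrow> length (dps S S') < length S"
  unfolding dps_def using length_filter_less[of i "[0..<length S]" "\<lambda>i. S!i \<noteq> S'!i"] by simp

lemma dps_ex: "i < length S \<Longrightarrow> S!i \<noteq> S'!i \<Longrightarrow> \<exists>j<length (dps S S'). dps S S'!j = i"
proof -
  assume "i < length S" "S!i \<noteq> S'!i"
  then have "i \<in> set (dps S S')" using set_dps by auto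
  then show ?thesis by (auto simp: in_set_conv_nth)
qed

lemma dps_nonempty: "length S' = length S \<Longrightarrow> S \<noteq> S' \<Longrightarrow> 0 < length (dps S S')"
proof -
  assume "length S' = length S" "S \<noteq> S'"
  then obtain i where "i < length S" "S!i \<noteq> S'!i" using nth_equalityI by metis
  then show ?thesis using dps_ex by fastforce
qed

lemma length_ovr[simp]: "length (ovr S S' Q) = length S" by (simp add: ovr_def)

lemma ovr_nth_ds: "j < length (dps S S') \<Longrightarrow> ovr S S' Q ! (dps S S' ! j) = (if Q j then S'!(dps S S'!j) else S!(dps S S'!j))"
proof -
  assume j: "j < length (dps S S')"
  have "(\<exists>j'<length (dps S S'). dps S S' ! j' = dps S S' ! j \<and> Q j') = Q j"
    using dps_inj[of _ S S' j] j by auto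
  then show ?thesis unfolding ovr_def using dps_nth[OF j] by simp
qed

lemma ovr_nth_nd: "i < length S \<Longrightarrow> S!i = S'!i \<Longrightarrow> ovr S S' Q ! i = S!i"
  unfolding ovr_def by auto

lemma ovr_nth: "i < length S \<Longrightarrow> ovr S S' Q ! i = (if (\<exists>j<length (dps S S'). dps S S' ! j = i \<and> Q j) then S'!i else S!i)"
  unfolding ovr_def by auto

lemma ovr_false: "(\<And>j. j < length (dps S S') \<Longrightarrow> \<not> Q j) \<Longrightarrow> ovr S S' Q = S"
  by (rule nth_equalityI) (auto simp: ovr_nth)

lemma ovr_true: "length S' = length S \<Longrightarrow> (\<And>j. j < length (dps S S') \<Longrightarrow> Q j) \<Longrightarrow> ovr S S' Q = S'"
proof (rule nth_equalityI)
  fix i assume L: "length S' = length S" and Q: "\<And>j. j < length (dps S S') \<Longrightarrow> Q j" and i: "i < length (ovr S S' Q)"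
  show "ovr S S' Q ! i = S' ! i"
  proof (cases "S!i = S'!i")
    case True then show ?thesis using i by (simp add: ovr_nth_nd)
  next
    case False
    then obtain j where "j < length (dps S S')" "dps S S'!j = i" using dps_ex[of i S S'] i by auto
    then show ?thesis using Q ovr_nth_ds by metis
  qed
qed auto

lemma ovr_eqD: "ovr S S' Q = ovr S S' Q' \<Longrightarrow> j < length (dps S S') \<Longrightarrow> Q j = Q' j"
  by (metis dps_nth ovr_nth_ds)

lemma tern_ovr: "tern_str n S \<Longrightarrow> tern_str n S' \<Longrightarrow> tern_str n (ovr S S' Q)"
  unfolding tern_str_def by (auto simp: ovr_def)

lemma tern_upd: "tern_str n S \<Longrightarrow> b < 3 \<Longrightarrow> tern_str n (S[i:=b])"
proof -
  assume a: "tern_str n S" "b < 3"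
  have "set (S[i:=b]) \<subseteq> insert b (set S)" by (rule set_update_subset_insert)
  then show ?thesis using a unfolding tern_str_def by (simp add: subset_iff) blast
qed

lemma differ_oneI:
  assumes "length V = length W" "i0 < length V" "V!i0 \<noteq> W!i0" "\<And>i. i < length V \<Longrightarrow> i \<noteq> i0 \<Longrightarrow> V!i = W!i"
  shows "differ_one V W"
proof -
  have "{i. i < length V \<and> V ! i \<noteq> W ! i} = {i0}"
  proof (rule set_eqI)
    fix x show "x \<in> {i. i < length V \<and> V ! i \<noteq> W ! i} \<longleftrightarrow> x \<in> {i0}"
      using assms by (cases "x = i0") auto
  qed
  then show ?thesis using assms(1) by (simp add: differ_one_def)
qed

lemma differ_one_neq: "differ_one V W \<Longrightarrow> V \<noteq> W"
proof
  assume "differ_one V W" "V = W"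
  moreover have "{i. i < length V \<and> V!i \<noteq> V!i} = {}" by simp
  ultimately show False unfolding differ_one_def by simp
qed

lemma differ_one_sym: "differ_one V W \<Longrightarrow> differ_one W V"
proof -
  assume a: "differ_one V W"
  then have L: "length W = length V" unfolding differ_one_def by simp
  have E: "{i. i < length W \<and> W!i \<noteq> V!i} = {i. i< length V \<and> V!i \<noteq> W!i}" using L by auto
  have "card {i. i< length V \<and> V!i \<noteq> W!i} = 1" using a unfolding differ_one_def by blast
  then show ?thesis using L E unfolding differ_one_def by presburger
qed

lemma differ_one_upd: "differ_one V W \<Longrightarrow> i < length V \<Longrightarrow> V!i = W!i \<Longrightarrow> differ_one (V[i:=b]) (W[i:=b])"
proof -
  assume a: "differ_one V W" "i < length V" "V!i = W!i"
  have lw: "length W = length V" using a(1) unfolding differ_one_def by simp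
  have "{j. j < length (V[i:=b]) \<and> V[i:=b] ! j \<noteq> W[i:=b] ! j} = {j. j < length V \<and> V ! j \<noteq> W ! j}"
    using a lw by (auto simp: nth_list_update)
  then show ?thesis using a(1) unfolding differ_one_def by (metis length_list_update)
qed

lemma differ_one_upd1: "i < length V \<Longrightarrow> b \<noteq> V!i \<Longrightarrow> differ_one V (V[i:=b])"
  by (rule differ_oneI[of _ _ i]) auto

lemma ovr_differ:
  assumes "length S' = length S" "j0 < length (dps S S')" "Q j0 \<noteq> Q' j0" "\<And>j. j < length (dps S S') \<Longrightarrow> j \<noteq> j0 \<Longrightarrow> Q j = Q' j"
  shows "differ_one (ovr S S' Q) (ovr S S' Q')"
proof (rule differ_oneI[of _ _ "dps S S' ! j0"])
  show "dps S S' ! j0 < length (ovr S S' Q)" using dps_nth assms by simp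
  show "ovr S S' Q ! (dps S S' ! j0) \<noteq> ovr S S' Q' ! (dps S S' ! j0)"
    using assms(3) ovr_nth_ds[OF assms(2)] dps_nth[OF assms(2)] by auto
  fix i assume i: "i < length (ovr S S' Q)" "i \<noteq> dps S S' ! j0"
  show "ovr S S' Q ! i = ovr S S' Q' ! i"
  proof (cases "S!i = S'!i")
    case True then show ?thesis using i by (simp add: ovr_nth_nd)
  next
    case False
    then obtain j where j: "j < length (dps S S')" "dps S S'!j = i" using dps_ex[of i S S'] i by auto
    then have "j \<noteq> j0" using i by auto
    then show ?thesis using j assms(4) ovr_nth_ds by metis
  qed
qed simp

definition walk :: "nat list \<Rightarrow> nat list \<Rightarrow> nat list list" where
  "walk S S' = map (\<lambda>k. ovr S S' (\<lambda>j. j < k)) [0..<Suc (length (dps S S'))]"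

lemma walk_ne[simp]: "walk S S' \<noteq> []" by (simp add: walk_def)
lemma hd_walk[simp]: "hd (walk S S') = S"
  by (simp add: walk_def hd_map ovr_false del: upt_Suc)
lemma last_walk[simp]: "length S' = length S \<Longrightarrow> last (walk S S') = S'"
  by (simp add: walk_def last_map ovr_true del: upt_Suc)
lemma length_walk: "length (walk S S') = Suc (length (dps S S'))" by (simp add: walk_def)
lemma distinct_walk: "distinct (walk S S')"
  unfolding walk_def distinct_map
proof
  show "inj_on (\<lambda>k. ovr S S' (\<lambda>j. j < k)) (set [0..<Suc (length (dps S S'))])"
  proof (rule inj_onI)
    fix k k' assume k: "k \<in> set [0..<Suc (length (dps S S'))]" "k' \<in> set [0..<Suc (length (dps S S'))]"
      and e: "ovr S S' (\<lambda>j. j < k) = ovr S S' (\<lambda>j. j < k')"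
    show "k = k'"
    proof (rule ccontr)
      assume "k \<noteq> k'"
      then have "min k k' < length (dps S S')" using k by auto
      from ovr_eqD[OF e this] show False using \<open>k \<noteq> k'\<close> by auto
    qed
  qed
qed simp
lemma tern_walk: "tern_str n S \<Longrightarrow> tern_str n S' \<Longrightarrow> W \<in> set (walk S S') \<Longrightarrow> tern_str n W"
  by (auto simp: walk_def tern_ovr)
lemma succ_walk: "length S' = length S \<Longrightarrow> successively differ_one (walk S S')"
  unfolding walk_def
  by (rule successively_map_upt) (rule ovr_differ, auto)

definition cyc :: "nat \<Rightarrow> nat \<Rightarrow> nat \<Rightarrow> nat \<Rightarrow> bool" where
  "cyc h p k j \<longleftrightarrow> (p \<le> j \<and> j < p + k) \<or> (j + h < p + k)"

definition nx :: "nat \<Rightarrow> nat \<Rightarrow> nat \<Rightarrow> nat" where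
  "nx h p k = (if p + k < h then p + k else p + k - h)"

definition pm1 :: "nat \<Rightarrow> nat \<Rightarrow> nat" where
  "pm1 h p = (if p = 0 then h - 1 else p - 1)"

definition sq :: "nat \<Rightarrow> nat \<Rightarrow> nat" where
  "sq h p = (if Suc p = h then 0 else Suc p)"

lemma cyc_mono: "k \<le> k' \<Longrightarrow> cyc h p k j \<Longrightarrow> cyc h p k' j"
  unfolding cyc_def by auto

lemma nx_lt: "p < h \<Longrightarrow> k < h \<Longrightarrow> nx h p k < h"
  unfolding nx_def by auto

lemma cyc_Suc: "p < h \<Longrightarrow> k < h \<Longrightarrow> j < h \<Longrightarrow> cyc h p (Suc k) j \<longleftrightarrow> cyc h p k j \<or> j = nx h p k"
  unfolding cyc_def nx_def by auto

lemma cyc_nx: "p < h \<Longrightarrow> k < h \<Longrightarrow> \<not> cyc h p k (nx h p k)"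
  unfolding cyc_def nx_def by auto

lemma cyc_nx': "p < h \<Longrightarrow> k < k' \<Longrightarrow> k' \<le> h \<Longrightarrow> cyc h p k' (nx h p k)"
  unfolding cyc_def nx_def by auto

lemma cyc_full: "p < h \<Longrightarrow> j < h \<Longrightarrow> cyc h p h j"
  unfolding cyc_def by auto

lemma cyc_zero: "p < h \<Longrightarrow> \<not> cyc h p 0 j"
  unfolding cyc_def by auto

lemma sq_lt: "p < h \<Longrightarrow> sq h p < h"
  unfolding sq_def by auto

lemma cyc_sq_excl: "p < h \<Longrightarrow> k < h \<Longrightarrow> \<not> cyc h (sq h p) k p"
  unfolding cyc_def sq_def by auto

lemma cyc_sq_full: "p < h \<Longrightarrow> j < h \<Longrightarrow> j \<noteq> p \<Longrightarrow> cyc h (sq h p) (h - 1) j"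
  unfolding cyc_def sq_def by auto

lemma nx_sq_ne: "p < h \<Longrightarrow> Suc k < h \<Longrightarrow> nx h (sq h p) k \<noteq> p"
  unfolding nx_def sq_def by auto

lemma cyc_one: "p < h \<Longrightarrow> j < h \<Longrightarrow> cyc h p 1 j \<longleftrightarrow> j = p"
  unfolding cyc_def by auto

lemma cyc_self: "p < h \<Longrightarrow> 1 \<le> k \<Longrightarrow> cyc h p k p"
  unfolding cyc_def by auto

lemma pm1_lt: "p < h \<Longrightarrow> pm1 h p < h"
  unfolding pm1_def by auto

lemma cyc_last: "p < h \<Longrightarrow> j < h \<Longrightarrow> cyc h p (h - 1) j \<longleftrightarrow> j \<noteq> pm1 h p"
  unfolding cyc_def pm1_def by auto

lemma cyc_pm1: "p < h \<Longrightarrow> k < h \<Longrightarrow> \<not> cyc h p k (pm1 h p)"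
  unfolding cyc_def pm1_def by auto

lemma cyc_FF:
  assumes "p < h" "p' < h" "p \<noteq> p'" "1 \<le> k" "k < h" "1 \<le> k'" "k' < h"
    and "cyc h p k p = cyc h p' k' p" and "cyc h p k (pm1 h p) = cyc h p' k' (pm1 h p)"
  shows False
  using assms unfolding cyc_def pm1_def by (auto split: if_splits)

lemma cyc_inj:
  assumes "p < h" "k < k'" "k' \<le> h" "\<And>j. j < h \<Longrightarrow> cyc h p k j = cyc h p k' j"
  shows False
proof -
  have "nx h p k < h" using assms nx_lt by auto
  then show False using assms(4)[of "nx h p k"] cyc_nx[of p h k] cyc_nx'[of p h k k'] assms by auto
qed

datatype key = KN nat nat | KC nat | KF nat | KL1 | KL2 | KS | KL1'

locale cfg =
  fixes X X' Y Y' Z Z' :: "nat list" and m n1 n2 :: nat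
  assumes tX: "tern_str m X" and tX': "tern_str m X'"
    and tY: "tern_str n1 Y" and tY': "tern_str n1 Y'"
    and tZ: "tern_str n2 Z" and tZ': "tern_str n2 Z'"
    and nX: "X \<noteq> X'" and nY: "Y \<noteq> Y'" and nZ: "Z \<noteq> Z'"
begin

abbreviation "ds \<equiv> dps X X'"
abbreviation "h \<equiv> length (dps X X')"
abbreviation "ov \<equiv> ovr X X'"

lemma lenX[simp]: "length X = m" using tX by (simp add: tern_str_def)
lemma lenX'[simp]: "length X' = m" using tX' by (simp add: tern_str_def)
lemma lenY[simp]: "length Y = n1" using tY by (simp add: tern_str_def)
lemma lenY'[simp]: "length Y' = n1" using tY' by (simp add: tern_str_def)
lemma lenZ[simp]: "length Z = n2" using tZ by (simp add: tern_str_def)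
lemma lenZ'[simp]: "length Z' = n2" using tZ' by (simp add: tern_str_def)

lemma h_pos: "0 < h" using dps_nonempty[of X' X] nX by simp
lemma h_le: "h \<le> m" using dps_len[of X X'] by simp

lemma Xlt: "i < m \<Longrightarrow> X!i < 3" using tX unfolding tern_str_def by auto
lemma X'lt: "i < m \<Longrightarrow> X'!i < 3" using tX' unfolding tern_str_def by auto

lemma ds_lt: "j < h \<Longrightarrow> ds!j < m" using dps_nth[of j X X'] by simp
lemma ds_ne: "j < h \<Longrightarrow> X!(ds!j) \<noteq> X'!(ds!j)" using dps_nth[of j X X'] by simp
lemma ds_inj: "j < h \<Longrightarrow> j' < h \<Longrightarrow> ds!j = ds!j' \<longleftrightarrow> j = j'" using dps_inj[of j X X' j'] by auto

definition c3 :: "nat \<Rightarrow> nat" where "c3 t = 3 - X!t - X'!t"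

lemma c3: "t < m \<Longrightarrow> X!t \<noteq> X'!t \<Longrightarrow> c3 t < 3 \<and> c3 t \<noteq> X!t \<and> c3 t \<noteq> X'!t"
  using Xlt[of t] X'lt[of t] unfolding c3_def by presburger

definition bN :: "nat \<Rightarrow> nat \<Rightarrow> nat" where "bN i a = (X!i + a) mod 3"

lemma bN: "i < m \<Longrightarrow> a = 1 \<or> a = 2 \<Longrightarrow> bN i a < 3 \<and> bN i a \<noteq> X!i"
  using Xlt[of i] unfolding bN_def by presburger

lemma bN_inj: "i < m \<Longrightarrow> a = 1 \<or> a = 2 \<Longrightarrow> a' = 1 \<or> a' = 2 \<Longrightarrow> bN i a = bN i a' \<Longrightarrow> a = a'"
  using Xlt[of i] unfolding bN_def by presburger

fun lk :: "key \<Rightarrow> nat list list" where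
  "lk (KN i a) = map (\<lambda>k. (ov (\<lambda>j. j < k))[i := bN i a]) [0..<Suc h]"
| "lk (KC p) = map (\<lambda>k. (ov (cyc h (sq h p) k))[ds!p := c3 (ds!p)]) [0..<h]"
| "lk (KF p) = map (\<lambda>k. ov (cyc h p k)) [1..<h]"
| "lk _ = []"

definition mk :: "key \<Rightarrow> bool" where
  "mk k = (case k of KN i a \<Rightarrow> i < m \<and> X!i = X'!i \<and> (a = 1 \<or> a = 2)
     | KC p \<Rightarrow> p < h | KF p \<Rightarrow> p < h \<and> 2 \<le> h | _ \<Rightarrow> False)"

lemma ov_nth_ds: "j < h \<Longrightarrow> ov Q ! (ds!j) = (if Q j then X'!(ds!j) else X!(ds!j))"
  by (rule ovr_nth_ds)
lemma ov_nth_nd: "t < m \<Longrightarrow> X!t = X'!t \<Longrightarrow> ov Q ! t = X!t"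
  by (rule ovr_nth_nd) simp_all
lemma ov_nth_ds2: "j < h \<Longrightarrow> ov Q ! (ds!j) = X!(ds!j) \<or> ov Q ! (ds!j) = X'!(ds!j)"
  using ov_nth_ds by simp

lemma ov_upd_eq: 
  assumes "\<And>j. j < h \<Longrightarrow> j \<noteq> p \<Longrightarrow> Q j = Q' j" "p < h"
  shows "(ov Q)[ds!p := c] = (ov Q')[ds!p := c]"
proof (rule nth_equalityI)
  fix t assume t: "t < length ((ov Q)[ds!p := c])"
  show "(ov Q)[ds!p := c] ! t = (ov Q')[ds!p := c] ! t"
  proof (cases "t = ds!p")
    case True then show ?thesis using t by simp
  next
    case False
    show ?thesis
    proof (cases "X!t = X'!t")
      case True then show ?thesis using t False by (simp add: ov_nth_nd)
    next
      case ne: False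
      then obtain j where j: "j < h" "ds!j = t" using dps_ex[of t X X'] t by auto
      then have "j \<noteq> p" using False by auto
      then have qq: "Q j = Q' j" using j assms(1)[of j] by simp
      have "ov Q ! (ds!j) = ov Q' ! (ds!j)" using ov_nth_ds[of j Q] ov_nth_ds[of j Q'] j(1) qq by simp
      then show ?thesis using j False by simp
    qed
  qed
qed simp

lemma ov_upd_differ:
  assumes "j0 < h" "Q j0 \<noteq> Q' j0" "\<And>j. j < h \<Longrightarrow> j \<noteq> j0 \<Longrightarrow> Q j = Q' j" "t < m" "ov Q ! t = ov Q' ! t"
  shows "differ_one ((ov Q)[t := c]) ((ov Q')[t := c])"
  by (rule differ_one_upd) (use assms ovr_differ[of X' X j0 Q Q'] in auto)

lemma ov_differ:
  assumes "j0 < h" "Q j0 \<noteq> Q' j0" "\<And>j. j < h \<Longrightarrow> j \<noteq> j0 \<Longrightarrow> Q j = Q' j"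
  shows "differ_one (ov Q) (ov Q')"
  using assms ovr_differ[of X' X j0 Q Q'] by auto

lemma ov_false: "ov (\<lambda>j. False) = X" by (rule ovr_false) simp
lemma ov_true: "ov (\<lambda>j. True) = X'" by (rule ovr_true) simp_all
lemma ov_cong: "(\<And>j. j < h \<Longrightarrow> Q j = Q' j) \<Longrightarrow> ov Q = ov Q'"
  unfolding ovr_def by (intro map_cong refl) auto

lemma ov_eqD: "ov Q = ov Q' \<Longrightarrow> j < h \<Longrightarrow> Q j = Q' j" by (rule ovr_eqD)

lemma ov_upd_eqD: "(ov Q)[t := b] = (ov Q')[t := b'] \<Longrightarrow> j < h \<Longrightarrow> ds!j \<noteq> t \<Longrightarrow> Q j = Q' j"
proof -
  assume e: "(ov Q)[t := b] = (ov Q')[t := b']" and j: "j < h" "ds!j \<noteq> t"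
  have "(ov Q)[t := b] ! (ds!j) = (ov Q')[t := b'] ! (ds!j)" using e by simp
  then have "ov Q ! (ds!j) = ov Q' ! (ds!j)" using j by simp
  then show ?thesis using j ov_nth_ds[of j Q] ov_nth_ds[of j Q'] ds_ne[of j] by (auto split: if_splits)
qed

lemma tern_ov: "tern_str m (ov Q)" by (rule tern_ovr[OF tX tX'])

end

context cfg begin

lemma upd_nth': "t < m \<Longrightarrow> (ov Q)[i := b] ! t = (if t = i then b else ov Q ! t)"
  by simp

lemma succ_map_upt_gen:
  assumes "\<And>k. a \<le> k \<Longrightarrow> Suc k < b \<Longrightarrow> P (f k) (f (Suc k))"
  shows "successively P (map f [a..<b])"
  using successively_map_upt assms by blast

lemma KN_facts:
  assumes A: "i < m" "X!i = X'!i" "a = 1 \<or> a = 2"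
  shows "lk (KN i a) \<noteq> []" "\<forall>W\<in>set (lk (KN i a)). tern_str m W" "distinct (lk (KN i a))"
    "successively differ_one (lk (KN i a))" "differ_one X (hd (lk (KN i a)))"
    "differ_one (last (lk (KN i a))) X'" "X \<notin> set (lk (KN i a))" "X' \<notin> set (lk (KN i a))"
    "length (lk (KN i a)) \<le> m"
    "\<forall>W\<in>set (lk (KN i a)). W!i = bN i a"
    "\<forall>W\<in>set (lk (KN i a)). \<forall>t. t < m \<longrightarrow> t \<noteq> i \<longrightarrow> X!t = X'!t \<longrightarrow> W!t = X!t"
    "\<forall>W\<in>set (lk (KN i a)). \<forall>j<h. W!(ds!j) = X!(ds!j) \<or> W!(ds!j) = X'!(ds!j)"
proof -
  define b where "b = bN i a"
  have bb: "b < 3" "b \<noteq> X!i" using bN[OF A(1) A(3)] b_def by auto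
  have hlt: "h < m" using dps_len_less[of i X X'] A by simp
  have notds: "\<And>j. j < h \<Longrightarrow> ds!j \<noteq> i" using ds_ne A(2) by metis
  have L: "lk (KN i a) = map (\<lambda>k. (ov (\<lambda>j. j < k))[i := b]) [0..<Suc h]" by (simp add: b_def)
  show "lk (KN i a) \<noteq> []" by (simp add: L)
  show "\<forall>W\<in>set (lk (KN i a)). tern_str m W" unfolding L using tern_upd[OF tern_ov bb(1)] by auto
  show "distinct (lk (KN i a))" unfolding L distinct_map
  proof
    show "inj_on (\<lambda>k. (ov (\<lambda>j. j < k))[i := b]) (set [0..<Suc h])"
    proof (rule inj_onI)
      fix k k' assume k: "k \<in> set [0..<Suc h]" "k' \<in> set [0..<Suc h]"
        and e: "(ov (\<lambda>j. j < k))[i := b] = (ov (\<lambda>j. j < k'))[i := b]"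
      show "k = k'"
      proof (rule ccontr)
        assume "k \<noteq> k'"
        then have "min k k' < h" using k by auto
        from ov_upd_eqD[OF e this notds[OF this]] show False using \<open>k \<noteq> k'\<close> by auto
      qed
    qed
  qed simp
  show "successively differ_one (lk (KN i a))" unfolding L
  proof (rule succ_map_upt_gen)
    fix k assume "0 \<le> k" "Suc k < Suc h"
    then show "differ_one ((ov (\<lambda>j. j < k))[i := b]) ((ov (\<lambda>j. j < Suc k))[i := b])"
      by (intro ov_upd_differ[of k]) (use A in \<open>auto simp: ov_nth_nd\<close>)
  qed
  have hd: "hd (lk (KN i a)) = X[i := b]" unfolding L by (simp add: hd_map ov_false del: upt_Suc)
  show "differ_one X (hd (lk (KN i a)))" unfolding hd using differ_one_upd1[of i X b] bb A by simp
  have ot: "ov (\<lambda>j. j < h) = X'" by (rule ovr_true) simp_all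
  have lst: "last (lk (KN i a)) = X'[i := b]" unfolding L by (simp add: last_map ot del: upt_Suc)
  show "differ_one (last (lk (KN i a))) X'" unfolding lst
    using differ_one_sym[OF differ_one_upd1[of i X' b]] bb A by simp
  have "\<forall>W\<in>set (lk (KN i a)). W!i = b" unfolding L using A by auto
  then show "\<forall>W\<in>set (lk (KN i a)). W!i = bN i a" by (simp add: b_def)
  show "X \<notin> set (lk (KN i a))" using \<open>\<forall>W\<in>set (lk (KN i a)). W!i = b\<close> bb by auto
  show "X' \<notin> set (lk (KN i a))"
  proof
    assume "X' \<in> set (lk (KN i a))"
    then have "X'!i = b" using \<open>\<forall>W\<in>set (lk (KN i a)). W!i = b\<close> by blast
    then show False using bb A by simp
  qed
  show "length (lk (KN i a)) \<le> m" unfolding L using hlt by simp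
  show "\<forall>W\<in>set (lk (KN i a)). \<forall>t. t < m \<longrightarrow> t \<noteq> i \<longrightarrow> X!t = X'!t \<longrightarrow> W!t = X!t"
    unfolding L by (auto simp: ov_nth_nd)
  show "\<forall>W\<in>set (lk (KN i a)). \<forall>j<h. W!(ds!j) = X!(ds!j) \<or> W!(ds!j) = X'!(ds!j)"
    unfolding L
  proof (intro ballI allI impI)
    fix W j assume W: "W \<in> set (map (\<lambda>k. (ov (\<lambda>j. j < k))[i := b]) [0..<Suc h])" and j: "j < h"
    then obtain k where Wk: "W = (ov (\<lambda>j. j < k))[i := b]" by auto
    have "W!(ds!j) = ov (\<lambda>j. j < k) ! (ds!j)" using Wk notds[OF j] by simp
    then show "W!(ds!j) = X!(ds!j) \<or> W!(ds!j) = X'!(ds!j)" using ov_nth_ds2[OF j] by metis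
  qed
qed

lemma KC_facts:
  assumes A: "p < h"
  shows "lk (KC p) \<noteq> []" "\<forall>W\<in>set (lk (KC p)). tern_str m W" "distinct (lk (KC p))"
    "successively differ_one (lk (KC p))" "differ_one X (hd (lk (KC p)))"
    "differ_one (last (lk (KC p))) X'" "X \<notin> set (lk (KC p))" "X' \<notin> set (lk (KC p))"
    "length (lk (KC p)) \<le> m"
    "\<forall>W\<in>set (lk (KC p)). W!(ds!p) = c3 (ds!p)"
    "\<forall>W\<in>set (lk (KC p)). \<forall>t. t < m \<longrightarrow> X!t = X'!t \<longrightarrow> W!t = X!t"
    "\<forall>W\<in>set (lk (KC p)). \<forall>j<h. j \<noteq> p \<longrightarrow> W!(ds!j) = X!(ds!j) \<or> W!(ds!j) = X'!(ds!j)"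
proof -
  define ip where "ip = ds!p"
  define c where "c = c3 ip"
  define q where "q = sq h p"
  have ipm: "ip < m" using ds_lt A ip_def by simp
  have cc: "c < 3" "c \<noteq> X!ip" "c \<noteq> X'!ip" using c3[OF ipm] ds_ne[OF A] c_def ip_def by auto
  have q: "q < h" using sq_lt A q_def by simp
  have L: "lk (KC p) = map (\<lambda>k. (ov (cyc h q k))[ip := c]) [0..<h]" by (simp add: ip_def c_def q_def)
  show "lk (KC p) \<noteq> []" using h_pos by (auto simp: L)
  show "\<forall>W\<in>set (lk (KC p)). tern_str m W" unfolding L using tern_upd[OF tern_ov cc(1)] by auto
  show "distinct (lk (KC p))" unfolding L distinct_map
  proof
    show "inj_on (\<lambda>k. (ov (cyc h q k))[ip := c]) (set [0..<h])"
    proof (rule inj_onI)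
      fix k k' assume k: "k \<in> set [0..<h]" "k' \<in> set [0..<h]"
        and e: "(ov (cyc h q k))[ip := c] = (ov (cyc h q k'))[ip := c]"
      show "k = k'"
      proof (rule ccontr)
        assume ne: "k \<noteq> k'"
        define j where "j = nx h q (min k k')"
        have j: "j < h" using nx_lt q k j_def by auto
        have jp: "j \<noteq> p" using nx_sq_ne[of p h "min k k'"] A k ne j_def q_def by auto
        have "ds!j \<noteq> ip" using ds_inj[OF j A] jp ip_def by simp
        from ov_upd_eqD[OF e j this] have "cyc h q k j = cyc h q k' j" .
        then show False using cyc_nx[of q h "min k k'"] cyc_nx'[of q h "min k k'" "max k k'"] q k ne j_def
          by (cases "k < k'") (auto simp: min_def max_def)
      qed
    qed
  qed simp
  show "successively differ_one (lk (KC p))" unfolding L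
  proof (rule succ_map_upt_gen)
    fix k assume k: "0 \<le> k" "Suc k < h"
    have j: "nx h q k < h" using nx_lt q k by auto
    show "differ_one ((ov (cyc h q k))[ip := c]) ((ov (cyc h q (Suc k)))[ip := c])"
    proof (rule ov_upd_differ[OF j])
      show "cyc h q k (nx h q k) \<noteq> cyc h q (Suc k) (nx h q k)" using cyc_Suc[of q h k] cyc_nx[of q h k] q k j by auto
      show "\<And>j. j < h \<Longrightarrow> j \<noteq> nx h q k \<Longrightarrow> cyc h q k j = cyc h q (Suc k) j"
        using cyc_Suc[of q h k] q k by auto
      show "ip < m" by (rule ipm)
      have "\<not> cyc h q k p" "\<not> cyc h q (Suc k) p" using cyc_sq_excl[OF A] k q_def by auto
      then show "ov (cyc h q k) ! ip = ov (cyc h q (Suc k)) ! ip"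
        using ov_nth_ds[OF A] ip_def by simp
    qed
  qed
  have "ov (cyc h q 0) = ov (\<lambda>j. False)" by (rule ov_cong) (use cyc_zero q in auto)
  then have hd: "hd (lk (KC p)) = X[ip := c]" unfolding L using h_pos by (simp add: upt_conv_Cons ov_false)
  show "differ_one X (hd (lk (KC p)))" unfolding hd using differ_one_upd1[of ip X c] cc ipm by simp
  have "(ov (cyc h q (h - 1)))[ip := c] = (ov (\<lambda>j. True))[ip := c]" unfolding ip_def
    by (rule ov_upd_eq) (use cyc_sq_full A q_def in auto)
  moreover have "[0..<h] = [0..<Suc (h-1)]" using h_pos by simp
  moreover have "[0..<Suc (h-1)] = [0..<h-1] @ [h-1]" by (rule upt_Suc_append) simp
  ultimately have lst: "last (lk (KC p)) = X'[ip := c]" unfolding L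
    by (simp add: ov_true)
  show "differ_one (last (lk (KC p))) X'" unfolding lst
    using differ_one_sym[OF differ_one_upd1[of ip X' c]] cc ipm by simp
  show v1: "\<forall>W\<in>set (lk (KC p)). W!(ds!p) = c3 (ds!p)" unfolding L using ipm by (auto simp: ip_def c_def)
  show "X \<notin> set (lk (KC p))" using v1 cc c_def ip_def by auto
  show "X' \<notin> set (lk (KC p))" using v1 cc c_def ip_def by auto
  show "length (lk (KC p)) \<le> m" unfolding L using h_le by simp
  show "\<forall>W\<in>set (lk (KC p)). \<forall>t. t < m \<longrightarrow> X!t = X'!t \<longrightarrow> W!t = X!t"
    unfolding L
  proof (intro ballI allI impI)
    fix W t assume W: "W \<in> set (map (\<lambda>k. (ov (cyc h q k))[ip := c]) [0..<h])" and t: "t < m" "X!t = X'!t"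
    then obtain k where Wk: "W = (ov (cyc h q k))[ip := c]" by auto
    have "t \<noteq> ip" using t ds_ne[OF A] ip_def by auto
    then have "W!t = ov (cyc h q k) ! t" using Wk t by simp
    also have "... = X!t" using ov_nth_nd[OF t] .
    finally show "W!t = X!t" .
  qed
  show "\<forall>W\<in>set (lk (KC p)). \<forall>j<h. j \<noteq> p \<longrightarrow> W!(ds!j) = X!(ds!j) \<or> W!(ds!j) = X'!(ds!j)"
    unfolding L using ds_inj A ds_lt ov_nth_ds2 ip_def by auto
qed

lemma KF_facts:
  assumes A: "p < h" "2 \<le> h"
  shows "lk (KF p) \<noteq> []" "\<forall>W\<in>set (lk (KF p)). tern_str m W" "distinct (lk (KF p))"
    "successively differ_one (lk (KF p))" "differ_one X (hd (lk (KF p)))"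
    "differ_one (last (lk (KF p))) X'" "X \<notin> set (lk (KF p))"
    "length (lk (KF p)) \<le> m"
    "\<forall>W\<in>set (lk (KF p)). \<forall>t. t < m \<longrightarrow> X!t = X'!t \<longrightarrow> W!t = X!t"
    "\<forall>W\<in>set (lk (KF p)). \<forall>j<h. W!(ds!j) = X!(ds!j) \<or> W!(ds!j) = X'!(ds!j)"
    "\<forall>W\<in>set (lk (KF p)). \<exists>k. 1 \<le> k \<and> k < h \<and> W = ov (cyc h p k)"
proof -
  have L: "lk (KF p) = map (\<lambda>k. ov (cyc h p k)) [1..<h]" by simp
  show "lk (KF p) \<noteq> []" using A by (auto simp: L)
  show "\<forall>W\<in>set (lk (KF p)). tern_str m W" using tern_ov by (auto simp: L)
  show "distinct (lk (KF p))" unfolding L distinct_map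
  proof
    show "inj_on (\<lambda>k. ov (cyc h p k)) (set [1..<h])"
    proof (rule inj_onI)
      fix k k' assume k: "k \<in> set [1..<h]" "k' \<in> set [1..<h]"
        and e: "ov (cyc h p k) = ov (cyc h p k')"
      have E: "\<And>j. j < h \<Longrightarrow> cyc h p k j = cyc h p k' j" using ov_eqD[OF e] by blast
      show "k = k'"
      proof (rule ccontr)
        assume ne: "k \<noteq> k'"
        show False
        proof (cases "k < k'")
          case True then show False using cyc_inj[of p h k k'] E A k by auto
        next
          case False then show False using cyc_inj[of p h k' k] E A k ne by auto
        qed
      qed
    qed
  qed simp
  show "successively differ_one (lk (KF p))" unfolding L
  proof (rule succ_map_upt_gen)
    fix k assume k: "1 \<le> k" "Suc k < h"
    have j: "nx h p k < h" using nx_lt A k by auto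
    show "differ_one (ov (cyc h p k)) (ov (cyc h p (Suc k)))"
    proof (rule ov_differ[OF j])
      show "cyc h p k (nx h p k) \<noteq> cyc h p (Suc k) (nx h p k)" using cyc_Suc[of p h k] cyc_nx[of p h k] A k j by auto
      show "\<And>j. j < h \<Longrightarrow> j \<noteq> nx h p k \<Longrightarrow> cyc h p k j = cyc h p (Suc k) j"
        using cyc_Suc[of p h k] A k by auto
    qed
  qed
  have hd: "hd (lk (KF p)) = ov (cyc h p 1)" unfolding L using A by (simp add: upt_conv_Cons)
  have "differ_one (ov (\<lambda>j. False)) (ov (cyc h p 1))"
    by (rule ov_differ[OF A(1)]) (use cyc_one A in auto)
  then show "differ_one X (hd (lk (KF p)))" unfolding hd ov_false .
  have e1: "Suc (h-1) = h" using A by simp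
  have "1 \<le> h-1" using A by simp
  from upt_Suc_append[OF this] have "[1..<h] = [1..<h-1] @ [h-1]" unfolding e1 .
  then have lst: "last (lk (KF p)) = ov (cyc h p (h - 1))" unfolding L by simp
  have "differ_one (ov (cyc h p (h - 1))) (ov (\<lambda>j. True))"
    by (rule ov_differ[OF pm1_lt[OF A(1)]]) (use cyc_last[of p h] pm1_lt[OF A(1)] A in auto)
  then show "differ_one (last (lk (KF p))) X'" unfolding lst ov_true .
  show "X \<notin> set (lk (KF p))"
  proof
    assume "X \<in> set (lk (KF p))"
    then obtain k where k: "1 \<le> k" "k < h" "ov (\<lambda>j. False) = ov (cyc h p k)" unfolding L ov_false by auto
    from ov_eqD[OF k(3) A(1)] show False using cyc_self[OF A(1) k(1)] by simp
  qed
  show "length (lk (KF p)) \<le> m" unfolding L using h_le by simp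
  show "\<forall>W\<in>set (lk (KF p)). \<forall>t. t < m \<longrightarrow> X!t = X'!t \<longrightarrow> W!t = X!t"
    unfolding L by (auto simp: ov_nth_nd)
  show "\<forall>W\<in>set (lk (KF p)). \<forall>j<h. W!(ds!j) = X!(ds!j) \<or> W!(ds!j) = X'!(ds!j)"
    unfolding L using ov_nth_ds2 by auto
  show "\<forall>W\<in>set (lk (KF p)). \<exists>k. 1 \<le> k \<and> k < h \<and> W = ov (cyc h p k)"
    unfolding L by auto
qed

end

context cfg begin

lemma mk_facts_all:
  assumes "mk k"
  shows "lk k \<noteq> [] \<and> (\<forall>W\<in>set (lk k). tern_str m W) \<and> distinct (lk k) \<and>
    successively differ_one (lk k) \<and> differ_one X (hd (lk k)) \<and>
    differ_one (last (lk k)) X' \<and> X \<notin> set (lk k) \<and> length (lk k) \<le> m \<and>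
    (h = 1 \<longrightarrow> X' \<notin> set (lk k))"
proof (cases k)
  case (KN i a)
  then have A: "i < m" "X!i = X'!i" "a = 1 \<or> a = 2" using assms by (auto simp: mk_def)
  show ?thesis unfolding KN using KN_facts(1-9)[OF A] by blast
next
  case (KC p)
  then have A: "p < h" using assms by (auto simp: mk_def)
  show ?thesis unfolding KC using KC_facts(1-9)[OF A] by blast
next
  case (KF p)
  then have A: "p < h" "2 \<le> h" using assms by (auto simp: mk_def)
  show ?thesis unfolding KF using KF_facts(1-8)[OF A] A(2) by auto
qed (use assms in \<open>auto simp: mk_def\<close>)

lemma mk_facts:
  assumes "mk k"
  shows "lk k \<noteq> []" "\<forall>W\<in>set (lk k). tern_str m W" "distinct (lk k)"
    "successively differ_one (lk k)" "differ_one X (hd (lk k))"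
    "differ_one (last (lk k)) X'" "X \<notin> set (lk k)" "length (lk k) \<le> m"
    "h = 1 \<Longrightarrow> X' \<notin> set (lk k)"
  using mk_facts_all[OF assms] by blast+

lemma lk_disj_N:
  assumes "mk (KN i a)" "mk k2" "KN i a \<noteq> k2" "W \<in> set (lk (KN i a))" "W \<in> set (lk k2)"
  shows False
proof -
  have A: "i < m" "X!i = X'!i" "a = 1 \<or> a = 2" using assms(1) by (auto simp: mk_def)
  have Wi: "W!i = bN i a" using KN_facts(10)[OF A] assms(4) by blast
  have bne: "bN i a \<noteq> X!i" using bN[OF A(1) A(3)] by simp
  show False
  proof (cases k2)
    case (KN i' a')
    have A': "i' < m" "X!i' = X'!i'" "a' = 1 \<or> a' = 2" using assms(2) KN by (auto simp: mk_def)
    show False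
    proof (cases "i = i'")
      case True
      then have "W!i = bN i a'" using KN_facts(10)[OF A'] assms(5) KN by blast
      then show False using Wi bN_inj[OF A(1) A(3)] A' True assms(3) KN by auto
    next
      case False
      then have "W!i = X!i" using KN_facts(11)[OF A'] assms(5) KN A by blast
      then show False using Wi bne by simp
    qed
  next
    case (KC p)
    then have "p < h" using assms(2) by (simp add: mk_def)
    then have "W!i = X!i" using KC_facts(11) assms(5) KC A by blast
    then show False using Wi bne by simp
  next
    case (KF p)
    then have "p < h" "2 \<le> h" using assms(2) by (auto simp: mk_def)
    then have "W!i = X!i" using KF_facts(9) assms(5) KF A by blast
    then show False using Wi bne by simp
  qed (use assms(2) in \<open>auto simp: mk_def\<close>)
qed

lemma lk_disj_C:
  assumes "mk (KC p)" "mk k2" "KC p \<noteq> k2" "\<not> (\<exists>i a. k2 = KN i a)" "W \<in> set (lk (KC p))" "W \<in> set (lk k2)"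
  shows False
proof -
  have A: "p < h" using assms(1) by (auto simp: mk_def)
  have Wp: "W!(ds!p) = c3 (ds!p)" using KC_facts(10)[OF A] assms(5) by blast
  have cc: "c3 (ds!p) \<noteq> X!(ds!p)" "c3 (ds!p) \<noteq> X'!(ds!p)" using c3[OF ds_lt[OF A] ds_ne[OF A]] by auto
  show False
  proof (cases k2)
    case (KC p')
    then have A': "p' < h" "p' \<noteq> p" using assms(2,3) by (auto simp: mk_def)
    then have "W!(ds!p) = X!(ds!p) \<or> W!(ds!p) = X'!(ds!p)" using KC_facts(12)[OF A'(1)] assms(6) KC A by blast
    then show False using Wp cc by auto
  next
    case (KF p')
    then have "p' < h" "2 \<le> h" using assms(2) by (auto simp: mk_def)
    then have "W!(ds!p) = X!(ds!p) \<or> W!(ds!p) = X'!(ds!p)" using KF_facts(10) assms(6) KF A by blast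
    then show False using Wp cc by auto
  qed (use assms(2,4) in \<open>auto simp: mk_def\<close>)
qed

lemma lk_disj_F:
  assumes "mk (KF p)" "mk (KF p')" "p \<noteq> p'" "W \<in> set (lk (KF p))" "W \<in> set (lk (KF p'))"
  shows False
proof -
  have A: "p < h" "2 \<le> h" "p' < h" using assms(1,2) by (auto simp: mk_def)
  obtain k where k: "1 \<le> k" "k < h" "W = ov (cyc h p k)" using KF_facts(11)[OF A(1,2)] assms(4) by blast
  obtain k' where k': "1 \<le> k'" "k' < h" "W = ov (cyc h p' k')" using KF_facts(11)[OF A(3,2)] assms(5) by blast
  have e: "ov (cyc h p k) = ov (cyc h p' k')" using k k' by simp
  show False
    using cyc_FF[OF A(1) A(3) assms(3) k(1,2) k'(1,2) ov_eqD[OF e A(1)] ov_eqD[OF e pm1_lt[OF A(1)]]] .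
qed

lemma lk_disj:
  assumes "mk k1" "mk k2" "k1 \<noteq> k2"
  shows "set (lk k1) \<inter> set (lk k2) = {}"
proof (rule ccontr)
  assume "set (lk k1) \<inter> set (lk k2) \<noteq> {}"
  then obtain W where W: "W \<in> set (lk k1)" "W \<in> set (lk k2)" by blast
  show False
  proof (cases k1)
    case (KN i a) then show False using lk_disj_N assms W by blast
  next
    case (KC p)
    show False
    proof (cases "\<exists>i a. k2 = KN i a")
      case True
      then obtain i a where "k2 = KN i a" by blast
      then show False using lk_disj_N[of i a k1 W] assms W by auto
    next
      case False then show False using lk_disj_C[of p k2 W] assms W KC by auto
    qed
  next
    case (KF p)
    show False
    proof (cases k2)
      case (KN i a) then show False using lk_disj_N[of i a k1 W] assms W by auto
    next
      case (KC p') then show False using lk_disj_C[of p' k1 W] assms W KF by auto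
    next
      case (KF p') then show False using lk_disj_F[of p p' W] assms W \<open>k1 = KF p\<close> by auto
    qed (use assms in \<open>auto simp: mk_def\<close>)
  qed (use assms in \<open>auto simp: mk_def\<close>)
qed

end

definition gadj :: "e3c_vertex \<Rightarrow> e3c_vertex \<Rightarrow> bool" where
  "gadj x y \<longleftrightarrow> (case x of (A,B,C,l) \<Rightarrow> case y of (A',B',C',l') \<Rightarrow>
     (A = A' \<and> B = B' \<and> C = C' \<and> l \<noteq> l' \<and> l < 3 \<and> l' < 3) \<or>
     (l = 0 \<and> l' = 0 \<and> differ_one A A' \<and> B = B' \<and> C = C') \<or>
     (l = 1 \<and> l' = 1 \<and> A = A' \<and> differ_one B B' \<and> C = C') \<or>
     (l = 2 \<and> l' = 2 \<and> A = A' \<and> B = B' \<and> differ_one C C'))"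

definition gverts :: "nat \<Rightarrow> nat \<Rightarrow> nat \<Rightarrow> e3c_vertex set" where
  "gverts m n1 n2 = {(A,B,C,l). tern_str m A \<and> tern_str n1 B \<and> tern_str n2 C \<and> l < 3}"

definition gp :: "nat \<Rightarrow> nat \<Rightarrow> nat \<Rightarrow> e3c_vertex list \<Rightarrow> bool" where
  "gp m n1 n2 p \<longleftrightarrow> distinct p \<and> set p \<subseteq> gverts m n1 n2 \<and> successively gadj p"

lemma gadj_sw: "l < 3 \<Longrightarrow> l' < 3 \<Longrightarrow> l \<noteq> l' \<Longrightarrow> gadj (A,B,C,l) (A,B,C,l')"
  unfolding gadj_def by simp
lemma gadj_x: "differ_one A A' \<Longrightarrow> gadj (A,B,C,0) (A',B,C,0)"
  unfolding gadj_def by simp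
lemma gadj_y: "differ_one B B' \<Longrightarrow> gadj (A,B,C,1) (A,B',C,1)"
  unfolding gadj_def by simp
lemma gadj_z: "differ_one C C' \<Longrightarrow> gadj (A,B,C,2) (A,B,C',2)"
  unfolding gadj_def by simp

lemma succ_x: "successively differ_one xs \<Longrightarrow> successively gadj (map (\<lambda>W. (W,B,C,0::nat)) xs)"
  unfolding successively_map by (erule successively_mono) (simp add: gadj_x)
lemma succ_y: "successively differ_one xs \<Longrightarrow> successively gadj (map (\<lambda>W. (A,W,C,1::nat)) xs)"
  unfolding successively_map by (erule successively_mono) (simp add: gadj_def)
lemma succ_z: "successively differ_one xs \<Longrightarrow> successively gadj (map (\<lambda>W. (A,B,W,2::nat)) xs)"
  unfolding successively_map by (erule successively_mono) (simp add: gadj_z)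

lemma succ_join: "successively P xs \<Longrightarrow> successively P ys \<Longrightarrow> xs \<noteq> [] \<Longrightarrow> ys \<noteq> [] \<Longrightarrow> P (last xs) (hd ys)
  \<Longrightarrow> successively P (xs @ ys)"
  by (simp add: successively_append_iff)

context cfg begin

abbreviation "u \<equiv> (X,Y,Z,0::nat)"
abbreviation "v \<equiv> (X',Y',Z',0::nat)"
abbreviation "wX \<equiv> walk X X'"
abbreviation "wY \<equiv> walk Y Y'"
abbreviation "wZ \<equiv> walk Z Z'"

definition PP :: "key \<Rightarrow> nat list" where "PP k = last (lk k)"

definition mainmid :: "key \<Rightarrow> e3c_vertex list" where
  "mainmid k = map (\<lambda>W. (W,Y,Z,0)) (lk k) @ map (\<lambda>S. (PP k,Y,S,2)) wZ @ map (\<lambda>S. (PP k,S,Z',1)) wY @ [(PP k,Y',Z',0)]"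

fun mid :: "key \<Rightarrow> e3c_vertex list" where
  "mid (KN i a) = mainmid (KN i a)"
| "mid (KC p) = mainmid (KC p)"
| "mid (KF p) = mainmid (KF p)"
| "mid KL1 = map (\<lambda>S. (X,Y,S,2)) wZ @ map (\<lambda>S. (S,Y,Z',0)) wX @ map (\<lambda>S. (X',S,Z',1)) wY"
| "mid KL2 = map (\<lambda>S. (X,S,Z,1)) wY @ map (\<lambda>S. (S,Y',Z,0)) wX @ map (\<lambda>S. (X',Y',S,2)) wZ"
| "mid KS = (X',Y,Z,0) # map (\<lambda>S. (X',Y,S,2)) wZ @ map (\<lambda>S. (X',S,Z',1)) wY"
| "mid KL1' = map (\<lambda>S. (X,Y,S,2)) wZ @ map (\<lambda>S. (X,S,Z',1)) wY @ [(X,Y',Z',0)]"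

lemma mid_main: "mk k \<Longrightarrow> mid k = mainmid k"
  by (cases k) (auto simp: mk_def)

lemma wlen: "length wX \<le> Suc m" "length wY \<le> Suc n1" "length wZ \<le> Suc n2"
  using dps_len[of X X'] dps_len[of Y Y'] dps_len[of Z Z'] by (auto simp: length_walk)

lemma wtern: "\<forall>S\<in>set wX. tern_str m S" "\<forall>S\<in>set wY. tern_str n1 S" "\<forall>S\<in>set wZ. tern_str n2 S"
  using tern_walk[OF tX tX'] tern_walk[OF tY tY'] tern_walk[OF tZ tZ'] by auto

lemma wsucc: "successively differ_one wX" "successively differ_one wY" "successively differ_one wZ"
  by (auto intro: succ_walk)

lemma wdist: "distinct wX" "distinct wY" "distinct wZ" by (auto intro: distinct_walk)

lemma main_path:
  assumes "mk k"
  shows "gp m n1 n2 (u # mid k @ [v]) \<and> length (mid k) \<le> m + n1 + n2 + 3 \<and> mid k \<noteq> []"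
proof -
  note F = mk_facts[OF assms]
  have Pin: "PP k \<in> set (lk k)" using F(1) PP_def by simp
  have PX: "PP k \<noteq> X" using Pin F(7) by auto
  have PX': "PP k \<noteq> X'" using F(6) differ_one_neq PP_def by metis
  have Pt: "tern_str m (PP k)" using Pin F(2) by blast
  have M: "mid k = mainmid k" by (rule mid_main[OF assms])
  define A1 where "A1 = map (\<lambda>W. (W,Y,Z,0::nat)) (lk k)"
  define A2 where "A2 = map (\<lambda>S. (PP k,Y,S,2::nat)) wZ"
  define A3 where "A3 = map (\<lambda>S. (PP k,S,Z',1::nat)) wY"
  have a3: "successively gadj (A3 @ [(PP k,Y',Z',0)])"
    unfolding A3_def by (rule succ_join[OF succ_y[OF wsucc(2)]]) (auto simp: last_map intro: gadj_sw)
  have a2: "successively gadj (A2 @ A3 @ [(PP k,Y',Z',0)])"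
    by (rule succ_join[OF _ a3]) (auto simp: A2_def A3_def last_map hd_map intro: succ_z[OF wsucc(3)] gadj_sw)
  have a1: "successively gadj (A1 @ A2 @ A3 @ [(PP k,Y',Z',0)])"
    by (rule succ_join[OF _ a2]) (use F(1) PP_def in \<open>auto simp: A1_def A2_def last_map hd_map intro: succ_x[OF F(4)] gadj_sw\<close>)
  have a0: "successively gadj ((A1 @ A2 @ A3 @ [(PP k,Y',Z',0)]) @ [v])"
    by (rule succ_join[OF a1]) (use F(6) PP_def in \<open>auto simp: gadj_x\<close>)
  have s: "successively gadj (u # mid k @ [v])"
    unfolding M mainmid_def A1_def[symmetric] A2_def[symmetric] A3_def[symmetric]
    using a0 F(1) F(5) by (auto simp: successively_Cons A1_def hd_map gadj_x)
  have d: "distinct (u # mid k @ [v])"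
    unfolding M mainmid_def using F(3) F(7) wdist PX PX' nY nZ
    by (auto simp: distinct_map inj_on_def)
  have g: "set (u # mid k @ [v]) \<subseteq> gverts m n1 n2"
    unfolding M mainmid_def gverts_def using F(2) Pt wtern tX tX' tY tY' tZ tZ' by auto
  have l: "length (mid k) \<le> m + n1 + n2 + 3"
    unfolding M mainmid_def using F(8) wlen by simp
  show ?thesis using s d g l unfolding gp_def M mainmid_def by simp
qed

end

lemma chain3:
  assumes "successively gadj B1" "successively gadj B2" "successively gadj B3"
    "B1 \<noteq> []" "B2 \<noteq> []" "B3 \<noteq> []"
    "gadj a (hd B1)" "gadj (last B1) (hd B2)" "gadj (last B2) (hd B3)" "gadj (last B3) b"
  shows "successively gadj (a # B1 @ B2 @ B3 @ [b])"
proof -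
  have "successively gadj (B3 @ [b])" using assms by (intro succ_join) auto
  then have "successively gadj (B2 @ B3 @ [b])" using assms by (intro succ_join) auto
  then have "successively gadj (B1 @ B2 @ B3 @ [b])" using assms by (intro succ_join) auto
  then show ?thesis using assms by (simp add: successively_Cons)
qed

context cfg begin

lemma h1_diff: "h = 1 \<Longrightarrow> differ_one X X'"
proof -
  assume h1: "h = 1"
  have "differ_one (ov (\<lambda>j. False)) (ov (\<lambda>j. True))"
    by (rule ov_differ[of 0]) (use h1 in auto)
  then show ?thesis unfolding ov_false ov_true .
qed

lemma extra_common:
  "\<forall>S\<in>set wX. tern_str m S" "\<forall>S\<in>set wY. tern_str n1 S" "\<forall>S\<in>set wZ. tern_str n2 S"
  using wtern by auto

lemma L1_path: "gp m n1 n2 (u # mid KL1 @ [v]) \<and> length (mid KL1) \<le> m + n1 + n2 + 3 \<and> mid KL1 \<noteq> []"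
proof -
  have s: "successively gadj (u # mid KL1 @ [v])"
    unfolding mid.simps append_assoc
    by (rule chain3[OF succ_z[OF wsucc(3)] succ_x[OF wsucc(1)] succ_y[OF wsucc(2)]])
       (auto simp: hd_map last_map gadj_def)
  have d: "distinct (u # mid KL1 @ [v])"
    using wdist nX nY nZ by (auto simp: distinct_map inj_on_def)
  have g: "set (u # mid KL1 @ [v]) \<subseteq> gverts m n1 n2"
    unfolding gverts_def using wtern tX tX' tY tY' tZ tZ' by auto
  have l: "length (mid KL1) \<le> m + n1 + n2 + 3" using wlen by simp
  show ?thesis using s d g l unfolding gp_def by simp
qed

lemma L2_path: "gp m n1 n2 (u # mid KL2 @ [v]) \<and> length (mid KL2) \<le> m + n1 + n2 + 3 \<and> mid KL2 \<noteq> []"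
proof -
  have s: "successively gadj (u # mid KL2 @ [v])"
    unfolding mid.simps append_assoc
    by (rule chain3[OF succ_y[OF wsucc(2)] succ_x[OF wsucc(1)] succ_z[OF wsucc(3)]])
       (auto simp: hd_map last_map gadj_def)
  have d: "distinct (u # mid KL2 @ [v])"
    using wdist nX nY nZ by (auto simp: distinct_map inj_on_def)
  have g: "set (u # mid KL2 @ [v]) \<subseteq> gverts m n1 n2"
    unfolding gverts_def using wtern tX tX' tY tY' tZ tZ' by auto
  have l: "length (mid KL2) \<le> m + n1 + n2 + 3" using wlen by simp
  show ?thesis using s d g l unfolding gp_def by simp
qed

lemma KS_path: "h = 1 \<Longrightarrow> gp m n1 n2 (u # mid KS @ [v]) \<and> length (mid KS) \<le> m + n1 + n2 + 3 \<and> mid KS \<noteq> []"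
proof -
  assume h1: "h = 1"
  have e: "u # mid KS @ [v] = u # [(X',Y,Z,0)] @ map (\<lambda>S. (X',Y,S,2)) wZ @ map (\<lambda>S. (X',S,Z',1)) wY @ [v]"
    by simp
  have s: "successively gadj (u # mid KS @ [v])"
    unfolding e
    by (rule chain3[OF _ succ_z[OF wsucc(3)] succ_y[OF wsucc(2)]])
       (use h1_diff[OF h1] in \<open>auto simp: hd_map last_map gadj_def\<close>)
  have d: "distinct (u # mid KS @ [v])"
    using wdist nX nY nZ by (auto simp: distinct_map inj_on_def)
  have g: "set (u # mid KS @ [v]) \<subseteq> gverts m n1 n2"
    unfolding gverts_def using wtern tX tX' tY tY' tZ tZ' by auto
  have l: "length (mid KS) \<le> m + n1 + n2 + 3" using wlen by simp
  show ?thesis using s d g l unfolding gp_def by simp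
qed

lemma KL1'_path: "h = 1 \<Longrightarrow> gp m n1 n2 (u # mid KL1' @ [v]) \<and> length (mid KL1') \<le> m + n1 + n2 + 3 \<and> mid KL1' \<noteq> []"
proof -
  assume h1: "h = 1"
  have s: "successively gadj (u # mid KL1' @ [v])"
    unfolding mid.simps append_assoc
    by (rule chain3[OF succ_z[OF wsucc(3)] succ_y[OF wsucc(2)]])
       (use h1_diff[OF h1] in \<open>auto simp: hd_map last_map gadj_def\<close>)
  have d: "distinct (u # mid KL1' @ [v])"
    using wdist nX nY nZ by (auto simp: distinct_map inj_on_def)
  have g: "set (u # mid KL1' @ [v]) \<subseteq> gverts m n1 n2"
    unfolding gverts_def using wtern tX tX' tY tY' tZ tZ' by auto
  have l: "length (mid KL1') \<le> m + n1 + n2 + 3" using wlen by simp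
  show ?thesis using s d g l unfolding gp_def by simp
qed

end

context cfg begin

definition Fi :: "nat list" where "Fi = filter (\<lambda>i. X!i = X'!i) [0..<m]"

definition keys :: "key list" where
  "keys = map (\<lambda>i. KN i 1) Fi @ map (\<lambda>i. KN i 2) Fi @ map KC [0..<h] @
     (if h = 1 then [KS, KL1', KL2] else map KF [0..<h] @ [KL1, KL2])"

lemma len_Fi: "length Fi = m - h"
proof -
  have "length (filter (\<lambda>i. X!i \<noteq> X'!i) [0..<m]) + length (filter (\<lambda>i. \<not> (X!i \<noteq> X'!i)) [0..<m]) = m"
    using sum_length_filter_compl[of "\<lambda>i. X!i \<noteq> X'!i" "[0..<m]"] by simp
  moreover have "ds = filter (\<lambda>i. X!i \<noteq> X'!i) [0..<m]" by (simp add: dps_def)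
  ultimately show ?thesis unfolding Fi_def by simp
qed

lemma len_keys: "length keys = 2 * m + 2"
  using len_Fi h_le h_pos unfolding keys_def by auto

lemma distinct_keys: "distinct keys"
  unfolding keys_def Fi_def by (auto simp: distinct_map inj_on_def)

lemma keys_cases: "k \<in> set keys \<Longrightarrow> mk k \<or> (h = 1 \<and> k \<in> {KS, KL1', KL2}) \<or> (h \<noteq> 1 \<and> k \<in> {KL1, KL2})"
  unfolding keys_def Fi_def mk_def using h_pos by (auto split: if_splits)

lemma key_path: "k \<in> set keys \<Longrightarrow> gp m n1 n2 (u # mid k @ [v]) \<and> length (mid k) \<le> m + n1 + n2 + 3 \<and> mid k \<noteq> []"
  using keys_cases[of k] main_path[of k] L1_path L2_path KS_path KL1'_path by auto

lemma PP_in: "mk k \<Longrightarrow> PP k \<in> set (lk k)"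
  using mk_facts(1)[of k] unfolding PP_def by simp

lemma PP_ne: "mk k \<Longrightarrow> PP k \<noteq> X \<and> PP k \<noteq> X'"
  using PP_in[of k] mk_facts(7)[of k] mk_facts(6)[of k] differ_one_neq unfolding PP_def by metis

lemma disj_main_main: "mk k1 \<Longrightarrow> mk k2 \<Longrightarrow> k1 \<noteq> k2 \<Longrightarrow> set (mid k1) \<inter> set (mid k2) = {}"
proof -
  assume a: "mk k1" "mk k2" "k1 \<noteq> k2"
  have D: "set (lk k1) \<inter> set (lk k2) = {}" by (rule lk_disj[OF a])
  have "PP k1 \<noteq> PP k2" using D PP_in[OF a(1)] PP_in[OF a(2)] by auto
  then show ?thesis unfolding mid_main[OF a(1)] mid_main[OF a(2)] mainmid_def
    using D nY nZ by auto
qed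

lemma disj_main_extra:
  assumes "mk k1" "(h = 1 \<and> k2 \<in> {KS, KL1', KL2}) \<or> (h \<noteq> 1 \<and> k2 \<in> {KL1, KL2})"
  shows "set (mid k1) \<inter> set (mid k2) = {}"
proof -
  have P: "PP k1 \<noteq> X" "PP k1 \<noteq> X'" using PP_ne[OF assms(1)] by auto
  have W: "h = 1 \<Longrightarrow> X' \<notin> set (lk k1)" using mk_facts(9)[OF assms(1)] by blast
  show ?thesis using assms(2) unfolding mid_main[OF assms(1)] mainmid_def
    using P W nX nY nZ by auto
qed

lemma disj_extra:
  assumes "(h = 1 \<and> k1 \<in> {KS, KL1', KL2}) \<or> (h \<noteq> 1 \<and> k1 \<in> {KL1, KL2})"
    "(h = 1 \<and> k2 \<in> {KS, KL1', KL2}) \<or> (h \<noteq> 1 \<and> k2 \<in> {KL1, KL2})" "k1 \<noteq> k2"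
  shows "set (mid k1) \<inter> set (mid k2) = {}"
  using assms nX nY nZ by auto

lemma key_disj: "k1 \<in> set keys \<Longrightarrow> k2 \<in> set keys \<Longrightarrow> k1 \<noteq> k2 \<Longrightarrow> set (mid k1) \<inter> set (mid k2) = {}"
  using keys_cases[of k1] keys_cases[of k2] disj_main_main[of k1 k2] disj_main_extra[of k1 k2]
    disj_main_extra[of k2 k1] disj_extra[of k1 k2] by blast

theorem abstract_thm:
  "\<exists>(ks :: key list) (md :: key \<Rightarrow> e3c_vertex list). length ks = 2 * m + 2 \<and> distinct ks \<and>
     (\<forall>k\<in>set ks. gp m n1 n2 (u # md k @ [v]) \<and> length (md k) \<le> m + n1 + n2 + 3 \<and> md k \<noteq> []) \<and>
     (\<forall>k1\<in>set ks. \<forall>k2\<in>set ks. k1 \<noteq> k2 \<longrightarrow> set (md k1) \<inter> set (md k2) = {})"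
  using len_keys distinct_keys key_path key_disj by blast

end

lemma transfer_lem:
  fixes emb :: "e3c_vertex \<Rightarrow> e3c_vertex" and a b :: e3c_vertex
  assumes ex: "\<exists>(ks :: key list) (md :: key \<Rightarrow> e3c_vertex list). length ks = 2 * m + 2 \<and> distinct ks \<and>
     (\<forall>k\<in>set ks. gp m n1 n2 (a # md k @ [b]) \<and> length (md k) \<le> m + n1 + n2 + 3 \<and> md k \<noteq> []) \<and>
     (\<forall>k1\<in>set ks. \<forall>k2\<in>set ks. k1 \<noteq> k2 \<longrightarrow> set (md k1) \<inter> set (md k2) = {})"
    and inj: "inj_on emb (gverts m n1 n2)"
    and vs: "\<And>x. x \<in> gverts m n1 n2 \<Longrightarrow> emb x \<in> e3c_verts r s t"
    and adj: "\<And>x y. x \<in> gverts m n1 n2 \<Longrightarrow> y \<in> gverts m n1 n2 \<Longrightarrow> gadj x y \<Longrightarrow> e3c_adj r s t (emb x) (emb y)"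
    and rm: "r \<le> m" and sm: "m + n1 + n2 = r + s + t"
  shows "\<exists>Ps :: e3c_vertex list list. length Ps = 2 * r + 2 \<and> distinct Ps \<and>
           (\<forall>p \<in> set Ps. e3c_path r s t (emb a) (emb b) p \<and> path_len p \<le> r + s + t + 4) \<and>
           (\<forall>i < length Ps. \<forall>j < length Ps. i \<noteq> j \<longrightarrow> internally_disjoint (Ps ! i) (Ps ! j))"
proof -
  obtain ks :: "key list" and md where K: "length ks = 2 * m + 2" "distinct ks"
    "\<And>k. k\<in>set ks \<Longrightarrow> gp m n1 n2 (a # md k @ [b]) \<and> length (md k) \<le> m + n1 + n2 + 3 \<and> md k \<noteq> []"
    "\<And>k1 k2. k1\<in>set ks \<Longrightarrow> k2\<in>set ks \<Longrightarrow> k1 \<noteq> k2 \<Longrightarrow> set (md k1) \<inter> set (md k2) = {}"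
    using ex by blast
  define ks' where "ks' = take (2 * r + 2) ks"
  define pth where "pth k = map emb (a # md k @ [b])" for k
  define Ps where "Ps = map pth ks'"
  have ks'_sub: "set ks' \<subseteq> set ks" unfolding ks'_def by (rule set_take_subset)
  have ks'_len: "length ks' = 2 * r + 2" unfolding ks'_def using K(1) rm by simp
  have ks'_dist: "distinct ks'" unfolding ks'_def using K(2) by simp
  have int: "interior (pth k) = emb ` set (md k)" for k
    unfolding interior_def pth_def by simp
  have sub: "k \<in> set ks \<Longrightarrow> set (md k) \<subseteq> gverts m n1 n2" for k
    using K(3)[of k] unfolding gp_def by auto
  have path: "e3c_path r s t (emb a) (emb b) (pth k) \<and> path_len (pth k) \<le> r + s + t + 4" if k: "k \<in> set ks" for k
  proof -
    have G: "distinct (a # md k @ [b])" "set (a # md k @ [b]) \<subseteq> gverts m n1 n2"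
      "successively gadj (a # md k @ [b])" "length (md k) \<le> m + n1 + n2 + 3"
      using K(3)[OF k] unfolding gp_def by auto
    define q where "q = a # md k @ [b]"
    have qs: "set q \<subseteq> gverts m n1 n2" using G q_def by simp
    have "distinct (map emb q)" using G(1) inj_on_subset[OF inj qs] q_def by (simp add: distinct_map)
    moreover have "set (map emb q) \<subseteq> e3c_verts r s t" using qs vs by auto
    moreover have "\<forall>i. Suc i < length (map emb q) \<longrightarrow> e3c_adj r s t (map emb q ! i) (map emb q ! Suc i)"
    proof (intro allI impI)
      fix i assume i: "Suc i < length (map emb q)"
      have "gadj (q!i) (q!Suc i)" using G(3) i unfolding successively_nth_iff q_def by simp
      moreover have "q!i \<in> gverts m n1 n2" "q!Suc i \<in> gverts m n1 n2" using qs i by (auto intro!: nth_mem[THEN subsetD[OF qs]])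
      ultimately show "e3c_adj r s t (map emb q ! i) (map emb q ! Suc i)" using adj i by simp
    qed
    ultimately have "e3c_path r s t (emb a) (emb b) (map emb q)"
      unfolding e3c_path_def q_def by (simp add: last_map)
    moreover have "path_len (map emb q) \<le> r + s + t + 4" unfolding path_len_def q_def using G(4) sm by simp
    ultimately show ?thesis unfolding pth_def q_def by simp
  qed
  have disj: "internally_disjoint (pth k1) (pth k2)" if "k1 \<in> set ks" "k2 \<in> set ks" "k1 \<noteq> k2" for k1 k2
  proof -
    have "emb ` set (md k1) \<inter> emb ` set (md k2) = emb ` (set (md k1) \<inter> set (md k2))"
      using inj_on_image_Int[OF inj sub[OF that(1)] sub[OF that(2)]] by simp
    then show ?thesis unfolding internally_disjoint_def int using K(4)[OF that] by simp
  qed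
  have nonempty: "interior (pth k) \<noteq> {}" if "k \<in> set ks" for k
    unfolding int using K(3)[OF that] by simp
  have D: "\<forall>i < length Ps. \<forall>j < length Ps. i \<noteq> j \<longrightarrow> internally_disjoint (Ps ! i) (Ps ! j)"
  proof (intro allI impI)
    fix i j assume ij: "i < length Ps" "j < length Ps" "i \<noteq> j"
    have "ks'!i \<noteq> ks'!j" using ks'_dist ij nth_eq_iff_index_eq unfolding Ps_def by fastforce
    moreover have "ks'!i \<in> set ks" "ks'!j \<in> set ks" using ij ks'_sub unfolding Ps_def by (auto intro: nth_mem[THEN subsetD[OF ks'_sub]])
    ultimately show "internally_disjoint (Ps ! i) (Ps ! j)" using disj ij unfolding Ps_def by simp
  qed
  have "distinct Ps"
    unfolding distinct_conv_nth
  proof (intro allI impI)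
    fix i j assume ij: "i < length Ps" "j < length Ps" "i \<noteq> j"
    have "ks'!i \<in> set ks" using ij ks'_sub unfolding Ps_def by (auto intro: nth_mem[THEN subsetD[OF ks'_sub]])
    then have ne: "interior (Ps!i) \<noteq> {}" using nonempty ij unfolding Ps_def by simp
    show "Ps ! i \<noteq> Ps ! j"
    proof
      assume "Ps!i = Ps!j"
      then show False using D ij ne unfolding internally_disjoint_def by force
    qed
  qed
  moreover have "\<forall>p \<in> set Ps. e3c_path r s t (emb a) (emb b) p \<and> path_len p \<le> r + s + t + 4"
    unfolding Ps_def using path ks'_sub by auto
  moreover have "length Ps = 2 * r + 2" unfolding Ps_def using ks'_len by simp
  ultimately show ?thesis using D by blast
qed

fun emb2 :: "e3c_vertex \<Rightarrow> e3c_vertex" where "emb2 (A,B,C,l) = (A,B,C,2-l)"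
fun emb1 :: "e3c_vertex \<Rightarrow> e3c_vertex" where
  "emb1 (A,B,C,l) = (B,A,C, if l = 0 then 1 else if l = 1 then 2 else 0)"
fun emb0 :: "e3c_vertex \<Rightarrow> e3c_vertex" where
  "emb0 (A,B,C,l) = (B,C,A, if l = 0 then 0 else if l = 1 then 2 else 1)"
lemma emb2_inj: "inj_on emb2 (gverts r s t)"
proof (rule inj_onI)
  fix x y assume xy: "x \<in> gverts r s t" "y \<in> gverts r s t" "emb2 x = emb2 y"
  obtain A B C l where x: "x = (A,B,C,l)" by (cases x) auto
  obtain A2 B2 C2 l2 where y: "y = (A2,B2,C2,l2)" by (cases y) auto
  have l: "l < 3" "l2 < 3" using xy(1,2) unfolding x y gverts_def by simp_all
  have e: "A = A2" "B = B2" "C = C2" "2 - l = 2 - l2" using xy(3) unfolding x y by simp_all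
  have "l = l2" using e(4) l by presburger
  then show "x = y" using e x y by simp
qed
lemma emb1_inj: "inj_on emb1 (gverts s r t)"
proof (rule inj_onI)
  fix x y assume xy: "x \<in> gverts s r t" "y \<in> gverts s r t" "emb1 x = emb1 y"
  obtain A B C l where x: "x = (A,B,C,l)" by (cases x) auto
  obtain A2 B2 C2 l2 where y: "y = (A2,B2,C2,l2)" by (cases y) auto
  have l: "l < 3" "l2 < 3" using xy(1,2) unfolding x y gverts_def by simp_all
  have e: "A = A2" "B = B2" "C = C2" "(if l = 0 then 1 else if l = 1 then 2 else 0::nat) = (if l2 = 0 then 1 else if l2 = 1 then 2 else 0)" using xy(3) unfolding x y by simp_all
  have "l = l2" using e(4) l by presburger
  then show "x = y" using e x y by simp
qed
lemma emb0_inj: "inj_on emb0 (gverts t r s)"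
proof (rule inj_onI)
  fix x y assume xy: "x \<in> gverts t r s" "y \<in> gverts t r s" "emb0 x = emb0 y"
  obtain A B C l where x: "x = (A,B,C,l)" by (cases x) auto
  obtain A2 B2 C2 l2 where y: "y = (A2,B2,C2,l2)" by (cases y) auto
  have l: "l < 3" "l2 < 3" using xy(1,2) unfolding x y gverts_def by simp_all
  have e: "A = A2" "B = B2" "C = C2" "(if l = 0 then 0 else if l = 1 then 2 else 1::nat) = (if l2 = 0 then 0 else if l2 = 1 then 2 else 1)" using xy(3) unfolding x y by simp_all
  have "l = l2" using e(4) l by presburger
  then show "x = y" using e x y by simp
qed
lemma emb2_v: "x \<in> gverts r s t \<Longrightarrow> emb2 x \<in> e3c_verts r s t"
proof -
  assume a: "x \<in> gverts r s t"
  obtain A B C l where x: "x = (A,B,C,l)" by (cases x) auto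
  show ?thesis using a unfolding x gverts_def e3c_verts_def by simp
qed
lemma emb1_v: "x \<in> gverts s r t \<Longrightarrow> emb1 x \<in> e3c_verts r s t"
proof -
  assume a: "x \<in> gverts s r t"
  obtain A B C l where x: "x = (A,B,C,l)" by (cases x) auto
  show ?thesis using a unfolding x gverts_def e3c_verts_def by simp
qed
lemma emb0_v: "x \<in> gverts t r s \<Longrightarrow> emb0 x \<in> e3c_verts r s t"
proof -
  assume a: "x \<in> gverts t r s"
  obtain A B C l where x: "x = (A,B,C,l)" by (cases x) auto
  show ?thesis using a unfolding x gverts_def e3c_verts_def by simp
qed

lemma gadj_neq: "gadj x y \<Longrightarrow> x \<noteq> y"
proof
  assume "gadj x y" "x = y"
  then have "gadj x x" by simp
  obtain A B C l where x: "x = (A,B,C,l)" by (cases x) auto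
  have "\<not> differ_one A A" "\<not> differ_one B B" "\<not> differ_one C C" using differ_one_neq by auto
  then show False using \<open>gadj x x\<close> unfolding x gadj_def by simp
qed

lemma gadj_cases:
  assumes "gadj (A,B,C,l) (A2,B2,C2,l2)"
  shows "(A=A2 \<and> B=B2 \<and> C=C2 \<and> l\<noteq>l2) \<or> (l=0 \<and> l2=0 \<and> differ_one A A2 \<and> B=B2 \<and> C=C2) \<or>
    (l=1 \<and> l2=1 \<and> A=A2 \<and> differ_one B B2 \<and> C=C2) \<or> (l=2 \<and> l2=2 \<and> A=A2 \<and> B=B2 \<and> differ_one C C2)"
  using assms unfolding gadj_def by auto

lemma emb2_adj: "x \<in> gverts r s t \<Longrightarrow> y \<in> gverts r s t \<Longrightarrow> gadj x y \<Longrightarrow> e3c_adj r s t (emb2 x) (emb2 y)"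
proof -
  assume a: "x \<in> gverts r s t" "y \<in> gverts r s t" "gadj x y"
  have ne: "emb2 x \<noteq> emb2 y" using gadj_neq[OF a(3)] emb2_inj a(1,2) by (meson inj_onD)
  obtain A B C l where x: "x = (A,B,C,l)" by (cases x) auto
  obtain A2 B2 C2 l2 where y: "y = (A2,B2,C2,l2)" by (cases y) auto
  have l: "l < 3" "l2 < 3" using a(1,2) unfolding x y gverts_def by simp_all
  have G: "(A=A2 \<and> B=B2 \<and> C=C2 \<and> l\<noteq>l2) \<or> (l=0 \<and> l2=0 \<and> differ_one A A2 \<and> B=B2 \<and> C=C2) \<or>
    (l=1 \<and> l2=1 \<and> A=A2 \<and> differ_one B B2 \<and> C=C2) \<or> (l=2 \<and> l2=2 \<and> A=A2 \<and> B=B2 \<and> differ_one C C2)"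
    using gadj_cases a(3) unfolding x y by blast
  have V: "emb2 x \<in> e3c_verts r s t" "emb2 y \<in> e3c_verts r s t" using emb2_v a(1,2) by auto
  show ?thesis unfolding e3c_adj_def using V ne G l unfolding x y
    by (elim disjE) (simp_all, presburger?)
qed

lemma emb1_adj: "x \<in> gverts s r t \<Longrightarrow> y \<in> gverts s r t \<Longrightarrow> gadj x y \<Longrightarrow> e3c_adj r s t (emb1 x) (emb1 y)"
proof -
  assume a: "x \<in> gverts s r t" "y \<in> gverts s r t" "gadj x y"
  have ne: "emb1 x \<noteq> emb1 y" using gadj_neq[OF a(3)] emb1_inj a(1,2) by (meson inj_onD)
  obtain A B C l where x: "x = (A,B,C,l)" by (cases x) auto
  obtain A2 B2 C2 l2 where y: "y = (A2,B2,C2,l2)" by (cases y) auto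
  have l: "l < 3" "l2 < 3" using a(1,2) unfolding x y gverts_def by simp_all
  have G: "(A=A2 \<and> B=B2 \<and> C=C2 \<and> l\<noteq>l2) \<or> (l=0 \<and> l2=0 \<and> differ_one A A2 \<and> B=B2 \<and> C=C2) \<or>
    (l=1 \<and> l2=1 \<and> A=A2 \<and> differ_one B B2 \<and> C=C2) \<or> (l=2 \<and> l2=2 \<and> A=A2 \<and> B=B2 \<and> differ_one C C2)"
    using gadj_cases a(3) unfolding x y by blast
  have V: "emb1 x \<in> e3c_verts r s t" "emb1 y \<in> e3c_verts r s t" using emb1_v a(1,2) by auto
  show ?thesis unfolding e3c_adj_def using V ne G l unfolding x y
    by (elim disjE) (simp_all, presburger?)
qed

lemma emb0_adj: "x \<in> gverts t r s \<Longrightarrow> y \<in> gverts t r s \<Longrightarrow> gadj x y \<Longrightarrow> e3c_adj r s t (emb0 x) (emb0 y)"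
proof -
  assume a: "x \<in> gverts t r s" "y \<in> gverts t r s" "gadj x y"
  have ne: "emb0 x \<noteq> emb0 y" using gadj_neq[OF a(3)] emb0_inj a(1,2) by (meson inj_onD)
  obtain A B C l where x: "x = (A,B,C,l)" by (cases x) auto
  obtain A2 B2 C2 l2 where y: "y = (A2,B2,C2,l2)" by (cases y) auto
  have l: "l < 3" "l2 < 3" using a(1,2) unfolding x y gverts_def by simp_all
  have G: "(A=A2 \<and> B=B2 \<and> C=C2 \<and> l\<noteq>l2) \<or> (l=0 \<and> l2=0 \<and> differ_one A A2 \<and> B=B2 \<and> C=C2) \<or>
    (l=1 \<and> l2=1 \<and> A=A2 \<and> differ_one B B2 \<and> C=C2) \<or> (l=2 \<and> l2=2 \<and> A=A2 \<and> B=B2 \<and> differ_one C C2)"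
    using gadj_cases a(3) unfolding x y by blast
  have V: "emb0 x \<in> e3c_verts r s t" "emb0 y \<in> e3c_verts r s t" using emb0_v a(1,2) by auto
  show ?thesis unfolding e3c_adj_def using V ne G l unfolding x y
    by (elim disjE) (simp_all, presburger?)
qed

theorem lemma13:
  fixes r s t :: nat and A B C A' B' C' :: "nat list" and d :: nat
  assumes "1 \<le> r" and "r \<le> s" and "s \<le> t"
    and "(A, B, C, d) \<in> e3c_verts r s t" and "(A', B', C', d) \<in> e3c_verts r s t"
    and "A \<noteq> A'" and "B \<noteq> B'" and "C \<noteq> C'"
  shows "\<exists>Ps :: e3c_vertex list list. length Ps = 2 * r + 2 \<and> distinct Ps \<and>
           (\<forall>p \<in> set Ps. e3c_path r s t (A, B, C, d) (A', B', C', d) p \<and>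
                          path_len p \<le> r + s + t + 4) \<and>
           (\<forall>i < length Ps. \<forall>j < length Ps. i \<noteq> j \<longrightarrow> internally_disjoint (Ps ! i) (Ps ! j))"
proof -
  have T: "tern_str r A" "tern_str s B" "tern_str t C" "d < 3"
    "tern_str r A'" "tern_str s B'" "tern_str t C'"
    using assms(4,5) by (simp_all add: e3c_verts_def)
  consider "d = 0" | "d = 1" | "d = 2" using T(4) by linarith
  then show ?thesis
  proof cases
    case 1
    interpret cfg C C' A A' B B' t r s
      by unfold_locales (use T assms in simp_all)
    have "emb0 (C,A,B,0) = (A,B,C,d)" "emb0 (C',A',B',0) = (A',B',C',d)" using 1 by simp_all
    moreover have "\<exists>Ps :: e3c_vertex list list. length Ps = 2 * r + 2 \<and> distinct Ps \<and>
           (\<forall>p \<in> set Ps. e3c_path r s t (emb0 (C,A,B,0)) (emb0 (C',A',B',0)) p \<and> path_len p \<le> r + s + t + 4) \<and>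
           (\<forall>i < length Ps. \<forall>j < length Ps. i \<noteq> j \<longrightarrow> internally_disjoint (Ps ! i) (Ps ! j))"
      by (rule transfer_lem[OF abstract_thm emb0_inj emb0_v emb0_adj]) (use assms in simp_all)
    ultimately show ?thesis by simp
  next
    case 2
    interpret cfg B B' A A' C C' s r t
      by unfold_locales (use T assms in simp_all)
    have "emb1 (B,A,C,0) = (A,B,C,d)" "emb1 (B',A',C',0) = (A',B',C',d)" using 2 by simp_all
    moreover have "\<exists>Ps :: e3c_vertex list list. length Ps = 2 * r + 2 \<and> distinct Ps \<and>
           (\<forall>p \<in> set Ps. e3c_path r s t (emb1 (B,A,C,0)) (emb1 (B',A',C',0)) p \<and> path_len p \<le> r + s + t + 4) \<and>
           (\<forall>i < length Ps. \<forall>j < length Ps. i \<noteq> j \<longrightarrow> internally_disjoint (Ps ! i) (Ps ! j))"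
      by (rule transfer_lem[OF abstract_thm emb1_inj emb1_v emb1_adj]) (use assms in simp_all)
    ultimately show ?thesis by simp
  next
    case 3
    interpret cfg A A' B B' C C' r s t
      by unfold_locales (use T assms in simp_all)
    have "emb2 (A,B,C,0) = (A,B,C,d)" "emb2 (A',B',C',0) = (A',B',C',d)" using 3 by simp_all
    moreover have "\<exists>Ps :: e3c_vertex list list. length Ps = 2 * r + 2 \<and> distinct Ps \<and>
           (\<forall>p \<in> set Ps. e3c_path r s t (emb2 (A,B,C,0)) (emb2 (A',B',C',0)) p \<and> path_len p \<le> r + s + t + 4) \<and>
           (\<forall>i < length Ps. \<forall>j < length Ps. i \<noteq> j \<longrightarrow> internally_disjoint (Ps ! i) (Ps ! j))"
      by (rule transfer_lem[OF abstract_thm emb2_inj emb2_v emb2_adj]) (use assms in simp_all)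
    ultimately show ?thesis by simp
  qed
qed

end
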